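(* Let $G$ be a topological group whose topology is induced by a left-invariant metric, and let $H$ be a subgroup of $G$. Then $H$ is strictly R-bounded if and only if $H$ is countable.
   Context: For a topological group $H$ with identity $e$, in the R-game in round $n\in\mathbb N$ player ONE chooses a neighborhood $U_n$ of $e$ and TWO a point $x_n\in H$; TWO wins if $H=\bigcup_n x_nU_n$. $H$ is strictly R-bounded if TWO has a winning strategy. *)

theory Defs
  imports "HOL-Analysis.Analysis"
begin

text \<open>The group G is a type of class topological_group_add (the group operation is
written additively but need NOT be commutative), whose topology is that of the metric dist.\<close>

definition is_subgroup :: "'a::group_add set \<Rightarrow> bool" where
  "is_subgroup H \<longleftrightarrow> 0 \<in> H \<and> (\<forall>x\<in>H. \<forall>y\<in>H. x + y \<in> H) \<and> (\<forall>x\<in>H. - x \<in> H)"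

definition nbhd_of_identity_in :: "'a::{topological_space,group_add} set \<Rightarrow> 'a set \<Rightarrow> bool" where
  "nbhd_of_identity_in H U \<longleftrightarrow> U \<subseteq> H \<and> (\<exists>V. open V \<and> 0 \<in> V \<and> V \<inter> H \<subseteq> U)"

text \<open>Strategy of TWO: maps the list [U_0,...,U_n] of ONE's moves so far to x_n \<in> H.
  It is winning if for every play of ONE, H is the union of the translates x_n U_n.\<close>
definition strictly_R_bounded :: "'a::{topological_space,group_add} set \<Rightarrow> bool" where
  "strictly_R_bounded H \<longleftrightarrow>
     (\<exists>\<sigma> :: 'a set list \<Rightarrow> 'a. (\<forall>l. \<sigma> l \<in> H) \<and>
        (\<forall>U :: nat \<Rightarrow> 'a set. (\<forall>n. nbhd_of_identity_in H (U n)) \<longrightarrow>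
            H = (\<Union>n. (\<lambda>u. \<sigma> (map U [0..<Suc n]) + u) ` U n)))"

end

theory Submission
  imports Defs
begin

lemma dist_trans_ball:
  fixes x u :: "'a::{metric_space, topological_group_add}"
  assumes li: "\<And>g x y :: 'a. dist (g + x) (g + y) = dist x y"
  shows "dist x (x + u) = dist 0 u"
  using li[of x 0 u] by simp

lemma unique_limit_point:
  fixes h h' :: "'a::metric_space"
  assumes "\<And>k::nat. dist h h' < 2 / real (Suc k)"
  shows "h = h'"
proof (rule ccontr)
  assume "h \<noteq> h'"
  then have d: "dist h h' > 0" by simp
  obtain k :: nat where k: "2 / dist h h' < real k" using reals_Archimedean2 by blast
  have "2 / real (Suc k) < dist h h'"
  proof -
    have "2 / dist h h' < real (Suc k)" using k by simp
    then have "2 < real (Suc k) * dist h h'" using d by (simp add: divide_less_eq)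
    then show ?thesis by (simp add: divide_less_eq mult.commute)
  qed
  with assms[of k] show False by simp
qed

theorem mainTheorem7:
  fixes H :: "'a::{metric_space, topological_group_add} set"
  assumes left_invariant: "\<And>g x y :: 'a. dist (g + x) (g + y) = dist x y"
    and "is_subgroup H"
  shows "strictly_R_bounded H \<longleftrightarrow> countable H"
proof
  have H0: "0 \<in> H" and Hadd: "\<And>x y. x \<in> H \<Longrightarrow> y \<in> H \<Longrightarrow> x + y \<in> H"
    using assms(2) unfolding is_subgroup_def by auto
  assume "strictly_R_bounded H"
  then obtain \<sigma> :: "'a set list \<Rightarrow> 'a" where sH: "\<forall>l. \<sigma> l \<in> H" and
    win: "\<And>U :: nat \<Rightarrow> 'a set. (\<forall>n. nbhd_of_identity_in H (U n)) \<Longrightarrow>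
            H = (\<Union>n. (\<lambda>u. \<sigma> (map U [0..<Suc n]) + u) ` U n)"
    unfolding strictly_R_bounded_def by blast
  define B where "B k = ball (0::'a) (1 / real (Suc k)) \<inter> H" for k :: nat
  define x where "x s = \<sigma> (map B s)" for s
  define P where "P s h \<longleftrightarrow> (\<forall>k. h \<in> (\<lambda>u. x (s @ [k]) + u) ` B k)" for s h
  have close: "dist (x (s @ [k])) h < 1 / real (Suc k)" if "P s h" for s h k
  proof -
    from that obtain u where u: "u \<in> B k" "h = x (s @ [k]) + u" unfolding P_def by blast
    then show ?thesis using dist_trans_ball[OF left_invariant, of "x (s @ [k])" u]
      unfolding B_def by simp
  qed
  have uniq: "h = h'" if "P s h" "P s h'" for s h h'
  proof (rule unique_limit_point)
    fix k
    have "dist h h' \<le> dist (x (s @ [k])) h + dist (x (s @ [k])) h'"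
      by (simp add: dist_triangle3)
    also have "\<dots> < 1 / real (Suc k) + 1 / real (Suc k)"
      using close[OF that(1)] close[OF that(2)] by (rule add_strict_mono)
    finally show "dist h h' < 2 / real (Suc k)" by simp
  qed
  have bad: "{h. \<exists>s. P s h} \<subseteq> (\<lambda>s. SOME h. P s h) ` UNIV"
  proof
    fix h assume "h \<in> {h. \<exists>s. P s h}"
    then obtain s where "P s h" by blast
    then have "(SOME h. P s h) = h" using uniq by (metis someI)
    then show "h \<in> (\<lambda>s. SOME h. P s h) ` UNIV" by (metis rangeI)
  qed
  have cbad: "countable {h. \<exists>s. P s h}"
    by (rule countable_subset[OF bad]) simp
  show "countable H"
  proof (rule ccontr)
    assume "\<not> countable H"
    then have "\<not> H \<subseteq> {h. \<exists>s. P s h}" using cbad countable_subset by blast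
    then obtain h where hH: "h \<in> H" and hP: "\<And>s. \<not> P s h" by blast
    then have "\<forall>s. \<exists>k. h \<notin> (\<lambda>u. x (s @ [k]) + u) ` B k" unfolding P_def by blast
    then obtain f where f: "\<And>s. h \<notin> (\<lambda>u. x (s @ [f s]) + u) ` B (f s)" by metis
    define ks where "ks = rec_nat [] (\<lambda>n l. l @ [f l])"
    have ks0: "ks 0 = []" and ksS: "\<And>n. ks (Suc n) = ks n @ [f (ks n)]"
      unfolding ks_def by simp_all
    define U where "U n = B (f (ks n))" for n
    have mapU: "map U [0..<n] = map B (ks n)" for n
      by (induction n) (simp_all add: ks0 ksS U_def)
    have nb: "\<forall>n. nbhd_of_identity_in H (U n)"
    proof
      fix n
      have "nbhd_of_identity_in H (B k)" for k
        unfolding nbhd_of_identity_in_def B_def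
      proof (intro conjI)
        show "ball 0 (1 / real (Suc k)) \<inter> H \<subseteq> H" by blast
        show "\<exists>V. open V \<and> 0 \<in> V \<and> V \<inter> H \<subseteq> ball 0 (1 / real (Suc k)) \<inter> H"
          by (rule exI[of _ "ball 0 (1 / real (Suc k))"]) simp
      qed
      then show "nbhd_of_identity_in H (U n)" unfolding U_def by blast
    qed
    have "h \<in> (\<Union>n. (\<lambda>u. \<sigma> (map U [0..<Suc n]) + u) ` U n)"
      using win[OF nb] hH by blast
    then obtain n where "h \<in> (\<lambda>u. \<sigma> (map U [0..<Suc n]) + u) ` U n" by blast
    moreover have "\<sigma> (map U [0..<Suc n]) = x (ks n @ [f (ks n)])"
      using mapU[of "Suc n"] by (simp add: x_def ksS)
    ultimately show False using f[of "ks n"] by (simp add: U_def)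
  qed
next
  have H0: "0 \<in> H" and Hadd: "\<And>x y. x \<in> H \<Longrightarrow> y \<in> H \<Longrightarrow> x + y \<in> H"
    using assms(2) unfolding is_subgroup_def by auto
  assume cH: "countable H"
  define \<sigma> where "\<sigma> l = from_nat_into H (length l - 1)" for l :: "'a set list"
  show "strictly_R_bounded H"
    unfolding strictly_R_bounded_def
  proof (intro exI[of _ \<sigma>] conjI allI impI)
    show "\<sigma> l \<in> H" for l
    proof -
      have "H \<noteq> {}" using H0 by blast
      then show ?thesis unfolding \<sigma>_def by (rule from_nat_into)
    qed
    fix U :: "nat \<Rightarrow> 'a set"
    assume nb: "\<forall>n. nbhd_of_identity_in H (U n)"
    have UH: "U n \<subseteq> H" and U0: "0 \<in> U n" for n
      using nb H0 unfolding nbhd_of_identity_in_def by blast+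
    have sn: "\<sigma> (map U [0..<Suc n]) = from_nat_into H n" for n
      by (simp add: \<sigma>_def)
    show "H = (\<Union>n. (\<lambda>u. \<sigma> (map U [0..<Suc n]) + u) ` U n)"
    proof
      show "H \<subseteq> (\<Union>n. (\<lambda>u. \<sigma> (map U [0..<Suc n]) + u) ` U n)"
      proof
        fix h assume hH: "h \<in> H"
        obtain n where hn: "from_nat_into H n = h" using from_nat_into_surj[OF cH hH] by blast
        have "h \<in> (\<lambda>u. \<sigma> (map U [0..<Suc n]) + u) ` U n"
        proof (rule image_eqI)
          show "h = \<sigma> (map U [0..<Suc n]) + 0" using sn[of n] \<open>from_nat_into H n = h\<close> by simp
        qed (rule U0)
        then show "h \<in> (\<Union>n. (\<lambda>u. \<sigma> (map U [0..<Suc n]) + u) ` U n)" by blast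
      qed
      show "(\<Union>n. (\<lambda>u. \<sigma> (map U [0..<Suc n]) + u) ` U n) \<subseteq> H"
      proof (intro UN_least image_subsetI)
        fix n u assume "u \<in> U n"
        then have "u \<in> H" using UH by blast
        moreover have "\<sigma> (map U [0..<Suc n]) \<in> H" 
        proof -
          have "H \<noteq> {}" using H0 by blast
          then show ?thesis unfolding sn[of n] by (rule from_nat_into)
        qed
        ultimately show "\<sigma> (map U [0..<Suc n]) + u \<in> H" using Hadd by blast
      qed
    qed
  qed
qed

end
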